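(* Let $q>r\geq 1$ be integers and $\alpha$ a real number. Suppose that for all positive integers $N$ we have $f_{q,r}(N)\geq N^{\alpha-\varepsilon(N)}$, for some function $\varepsilon$ with $\lim_{N\to\infty}\varepsilon(N)=0$. Then $f_{q,r}(N)\geq N^{\alpha}$ for all positive integers $N$.
   Context: For a $q$-edge-colored complete graph $K$ on vertex set $[N]$ with its natural order, $f_{q,r}(K)$ is the maximum number of vertices of a monotone path (vertices strictly increasing in traversal order) in $K$ whose edges use at most $r$ colors; $f_{q,r}(N)$ is the minimum of $f_{q,r}(K)$ over all such $q$-edge-colored $K$ on $N$ vertices. *)

theory Defs
  imports Complex_Main
begin

text \<open>A q-edge-colouring of the complete graph on [N] = {1..N}: the colour of the
  edge {i,j} with i < j is c i j, which must lie in {0..<q}. Values of c on other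
  arguments are irrelevant (paths only use pairs i < j).\<close>
definition is_coloring :: "nat \<Rightarrow> nat \<Rightarrow> (nat \<Rightarrow> nat \<Rightarrow> nat) \<Rightarrow> bool" where
  "is_coloring q N c \<longleftrightarrow> (\<forall>i j. 1 \<le> i \<longrightarrow> i < j \<longrightarrow> j \<le> N \<longrightarrow> c i j < q)"

definition path_colors :: "(nat \<Rightarrow> nat \<Rightarrow> nat) \<Rightarrow> nat list \<Rightarrow> nat set" where
  "path_colors c xs = set (map (\<lambda>(a, b). c a b) (zip xs (tl xs)))"

definition good_path :: "nat \<Rightarrow> nat \<Rightarrow> (nat \<Rightarrow> nat \<Rightarrow> nat) \<Rightarrow> nat list \<Rightarrow> bool" where
  "good_path r N c xs \<longleftrightarrow> sorted_wrt (<) xs \<and> set xs \<subseteq> {1..N} \<and> card (path_colors c xs) \<le> r"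

definition fK :: "nat \<Rightarrow> nat \<Rightarrow> (nat \<Rightarrow> nat \<Rightarrow> nat) \<Rightarrow> nat" where
  "fK r N c = Max {length xs | xs. good_path r N c xs}"

definition f :: "nat \<Rightarrow> nat \<Rightarrow> nat \<Rightarrow> nat" where
  "f q r N = Min {fK r N c | c. is_coloring q N c}"

end

theory Submission
  imports Defs
begin

lemma powr_pow_swap: "(x::real) > 0 \<Longrightarrow> (x^k) powr e = (x powr e)^k"
proof -
  assume x: "x > 0"
  have "x^k = x powr real k" using x by (simp add: powr_realpow)
  hence "(x^k) powr e = x powr (real k * e)" by (simp add: powr_powr)
  also have "\<dots> = (x powr e) powr real k" by (simp add: powr_powr mult.commute)
  also have "\<dots> = (x powr e)^k" using x by (simp add: powr_realpow)
  finally show ?thesis .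
qed

lemma pc_Nil[simp]: "path_colors c [] = {}" and pc_single[simp]: "path_colors c [x] = {}"
  and pc_cons2[simp]: "path_colors c (x # y # zs) = insert (c x y) (path_colors c (y # zs))"
  by (auto simp: path_colors_def)

lemma pc_finite[simp]: "finite (path_colors c xs)"
  by (simp add: path_colors_def)

lemma good_len: "good_path r N c xs \<Longrightarrow> length xs \<le> N"
proof -
  assume g: "good_path r N c xs"
  hence d: "distinct xs" using strict_sorted_iff unfolding good_path_def by blast
  have "length xs = card (set xs)" using d by (simp add: distinct_card)
  also have "\<dots> \<le> card {1..N}" using g unfolding good_path_def by (intro card_mono) auto
  finally show ?thesis by simp
qed

lemma fK_finite: "finite {length xs | xs. good_path r N c xs}"
  by (rule finite_subset[of _ "{..N}"]) (auto dest: good_len)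

lemma fK_ge: "good_path r N c xs \<Longrightarrow> length xs \<le> fK r N c"
  unfolding fK_def by (rule Max_ge[OF fK_finite]) blast

lemma fK_le_N: "fK r N c \<le> N"
proof -
  have ne: "{length xs | xs. good_path r N c xs} \<noteq> {}"
  proof -
    have "good_path r N c []" by (simp add: good_path_def)
    thus ?thesis by blast
  qed
  show ?thesis unfolding fK_def using Max_in[OF fK_finite ne] by (auto dest: good_len)
qed

lemma fK_bound:
  assumes "\<And>xs. good_path r N c xs \<Longrightarrow> length xs \<le> m"
  shows "fK r N c \<le> m"
proof -
  have ne: "{length xs | xs. good_path r N c xs} \<noteq> {}"
  proof -
    have "good_path r N c []" by (simp add: good_path_def)
    thus ?thesis by blast
  qed
  show ?thesis unfolding fK_def using Max_in[OF fK_finite ne] assms by auto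
qed

lemma f_finite: "finite {fK r N c | c. is_coloring q N c}"
  by (rule finite_subset[of _ "{..N}"]) (auto intro: fK_le_N)

lemma f_le: "is_coloring q N c \<Longrightarrow> f q r N \<le> fK r N c"
  unfolding f_def by (rule Min_le[OF f_finite]) blast

lemma f_attained: assumes "q > 0" shows "\<exists>c. is_coloring q N c \<and> f q r N = fK r N c"
proof -
  have ne: "{fK r N c | c. is_coloring q N c} \<noteq> {}"
    using assms by (auto simp: is_coloring_def)
  show ?thesis using Min_in[OF f_finite ne] unfolding f_def by auto
qed

definition A :: "nat \<Rightarrow> nat \<Rightarrow> nat" where "A M v = (v - 1) div M + 1"
definition B :: "nat \<Rightarrow> nat \<Rightarrow> nat" where "B M v = (v - 1) mod M + 1"
definition pc :: "(nat \<Rightarrow> nat \<Rightarrow> nat) \<Rightarrow> (nat \<Rightarrow> nat \<Rightarrow> nat) \<Rightarrow> nat \<Rightarrow> nat \<Rightarrow> nat \<Rightarrow> nat" where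
  "pc c1 c2 M v w = (if A M v < A M w then c1 (A M v) (A M w) else c2 (B M v) (B M w))"

lemma A_range: "v \<in> {1..N*M} \<Longrightarrow> M > 0 \<Longrightarrow> A M v \<in> {1..N}"
  unfolding A_def
  by (auto simp: less_mult_imp_div_less) (metis Suc_pred' diff_Suc_less less_le_trans less_mult_imp_div_less
      mult.commute mult_pos_pos le_less_trans Suc_le_eq div_le_mono dual_order.refl)

lemma B_range: "M > 0 \<Longrightarrow> B M v \<in> {1..M}"
  unfolding B_def by (simp add: Suc_leI)

lemma AB_mono: assumes "M > 0" "1 \<le> v" "v < w"
  shows "A M v \<le> A M w" "A M v = A M w \<Longrightarrow> B M v < B M w"
proof -
  show "A M v \<le> A M w" unfolding A_def using assms by (simp add: div_le_mono)
  assume "A M v = A M w"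
  hence e: "(v - 1) div M = (w - 1) div M" unfolding A_def by simp
  define a b where "a = v - 1" and "b = w - 1"
  have ab: "a < b" using assms unfolding a_def b_def by simp
  have e': "a div M = b div M" using e unfolding a_def b_def .
  have "a div M * M + a mod M < b div M * M + b mod M" using ab by (simp only: div_mult_mod_eq)
  hence "a mod M < b mod M" unfolding e' by (rule add_less_imp_less_left)
  thus "B M v < B M w" unfolding B_def a_def b_def by simp
qed

lemma prod_main:
  assumes M: "M > 0"
    and bnd: "\<And>zs. sorted_wrt (<) zs \<Longrightarrow> set zs \<subseteq> {1..M} \<Longrightarrow> path_colors c2 zs \<subseteq> P \<Longrightarrow> length zs \<le> m2"
  shows "sorted_wrt (<) xs \<Longrightarrow> set xs \<subseteq> {1..N*M} \<Longrightarrow> xs \<noteq> [] \<Longrightarrow> path_colors (pc c1 c2 M) xs \<subseteq> P \<Longrightarrow>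
    \<exists>ys zs. sorted_wrt (<) ys \<and> set ys \<subseteq> {1..N} \<and> path_colors c1 ys \<subseteq> P \<and> ys \<noteq> [] \<and> hd ys = A M (hd xs)
     \<and> sorted_wrt (<) zs \<and> set zs \<subseteq> {1..M} \<and> path_colors c2 zs \<subseteq> P \<and> zs \<noteq> [] \<and> hd zs = B M (hd xs)
     \<and> length xs \<le> m2 * (length ys - 1) + length zs"
proof (induction xs)
  case Nil
  then show ?case by simp
next
  case (Cons x xs)
  show ?case
  proof (cases xs)
    case Nil
    show ?thesis
      apply (rule exI[where x="[A M x]"], rule exI[where x="[B M x]"])
      using Cons.prems A_range[of x N M] B_range[OF M, of x] M Nil by auto
  next
    case (Cons x' rest)
    have s: "x < x'" "sorted_wrt (<) xs" using Cons.prems(1) \<open>xs = x' # rest\<close>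
      by (auto simp: sorted_wrt2)
    have x1: "1 \<le> x" "x \<in> {1..N*M}" using Cons.prems(2) by auto
    have cx: "pc c1 c2 M x x' \<in> P" "path_colors (pc c1 c2 M) xs \<subseteq> P"
      using Cons.prems(4) \<open>xs = x' # rest\<close> by auto
    obtain ys zs where IH: "sorted_wrt (<) ys" "set ys \<subseteq> {1..N}" "path_colors c1 ys \<subseteq> P" "ys \<noteq> []"
      "hd ys = A M x'" "sorted_wrt (<) zs" "set zs \<subseteq> {1..M}" "path_colors c2 zs \<subseteq> P" "zs \<noteq> []"
      "hd zs = B M x'" "length xs \<le> m2 * (length ys - 1) + length zs"
      using Cons.IH[OF s(2)] Cons.prems(2) cx(2) \<open>xs = x' # rest\<close> by auto
    obtain y ys' where ys: "ys = y # ys'" using IH(4) by (cases ys) auto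
    obtain z zs' where zs: "zs = z # zs'" using IH(9) by (cases zs) auto
    have mono: "A M x \<le> A M x'" "A M x = A M x' \<Longrightarrow> B M x < B M x'"
      using AB_mono[OF M x1(1) s(1)] by auto
    show ?thesis
    proof (cases "A M x = A M x'")
      case True
      have bl: "B M x < B M x'" using mono(2)[OF True] .
      have col: "c2 (B M x) (B M x') \<in> P" using cx(1) True unfolding pc_def by simp
      show ?thesis
        apply (rule exI[where x=ys], rule exI[where x="B M x # zs"])
        using IH ys zs bl col True B_range[OF M, of x] \<open>xs = x' # rest\<close>
        by (auto simp: sorted_wrt2)
    next
      case False
      hence lt: "A M x < A M x'" using mono(1) by simp
      have col: "c1 (A M x) (A M x') \<in> P" using cx(1) lt unfolding pc_def by simp
      have lz: "length zs \<le> m2" using bnd[OF IH(6) IH(7) IH(8)] .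
      show ?thesis
        apply (rule exI[where x="A M x # ys"], rule exI[where x="[B M x]"])
        using IH ys zs lt col A_range[OF x1(2) M] B_range[OF M, of x] lz
        by (auto simp: sorted_wrt2 algebra_simps)
    qed
  qed
qed

lemma pc_coloring:
  assumes "M > 0" "is_coloring q N c1" "is_coloring q M c2"
  shows "is_coloring q (N*M) (pc c1 c2 M)"
  unfolding is_coloring_def
proof (intro allI impI)
  fix v w assume v: "1 \<le> v" "v < w" "w \<le> N*M"
  have vw: "v \<in> {1..N*M}" "w \<in> {1..N*M}" using v by auto
  have av: "A M v \<in> {1..N}" "A M w \<in> {1..N}" using A_range[OF vw(1) assms(1)] A_range[OF vw(2) assms(1)] by auto
  have bv: "B M v \<in> {1..M}" "B M w \<in> {1..M}" using B_range[OF assms(1)] by auto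
  show "pc c1 c2 M v w < q"
  proof (cases "A M v < A M w")
    case True thus ?thesis using assms(2) av unfolding pc_def is_coloring_def by auto
  next
    case False
    hence "A M v = A M w" using AB_mono(1)[OF assms(1) v(1,2)] by simp
    hence "B M v < B M w" using AB_mono(2)[OF assms(1) v(1,2)] by simp
    thus ?thesis using False assms(3) bv unfolding pc_def is_coloring_def by auto
  qed
qed

lemma submult:
  assumes "M > 0" "q > 0"
  shows "f q r (N*M) \<le> f q r N * f q r M"
proof -
  obtain c1 where c1: "is_coloring q N c1" "f q r N = fK r N c1" using f_attained assms(2) by blast
  obtain c2 where c2: "is_coloring q M c2" "f q r M = fK r M c2" using f_attained assms(2) by blast
  let ?m1 = "fK r N c1" and ?m2 = "fK r M c2"
  have "fK r (N*M) (pc c1 c2 M) \<le> ?m1 * ?m2"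
  proof (rule fK_bound)
    fix xs assume g: "good_path r (N*M) (pc c1 c2 M) xs"
    show "length xs \<le> ?m1 * ?m2"
    proof (cases "xs = []")
      case True thus ?thesis by simp
    next
      case False
      let ?P = "path_colors (pc c1 c2 M) xs"
      have cP: "card ?P \<le> r" using g unfolding good_path_def by simp
      have bnd2: "length zs \<le> ?m2" if "sorted_wrt (<) zs" "set zs \<subseteq> {1..M}" "path_colors c2 zs \<subseteq> ?P" for zs
      proof -
        have "card (path_colors c2 zs) \<le> card ?P" using that(3) by (intro card_mono) auto
        thus ?thesis using that cP by (intro fK_ge) (simp add: good_path_def)
      qed
      obtain ys zs where Y: "sorted_wrt (<) ys" "set ys \<subseteq> {1..N}" "path_colors c1 ys \<subseteq> ?P" "ys \<noteq> []"
        "sorted_wrt (<) zs" "set zs \<subseteq> {1..M}" "path_colors c2 zs \<subseteq> ?P"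
        "length xs \<le> ?m2 * (length ys - 1) + length zs"
      proof -
        have gs: "sorted_wrt (<) xs" "set xs \<subseteq> {1..N*M}" using g unfolding good_path_def by auto
        from prod_main[OF assms(1) bnd2 gs False subset_refl] that show ?thesis by blast
      qed
      have "card (path_colors c1 ys) \<le> card ?P" using Y(3) by (intro card_mono) auto
      hence ly: "length ys \<le> ?m1" using Y cP by (intro fK_ge) (simp add: good_path_def)
      have lz: "length zs \<le> ?m2" using bnd2 Y by blast
      have ly1: "length ys \<ge> 1" using Y(4) by (cases ys) auto
      have "?m2 * (length ys - 1) \<le> ?m2 * (?m1 - 1)" by (intro mult_le_mono2 diff_le_mono ly)
      hence "length xs \<le> ?m2 * (?m1 - 1) + ?m2" using Y(8) lz by linarith
      also have "\<dots> = ?m1 * ?m2"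
      proof -
        obtain k where "?m1 = Suc k" using ly ly1 by (cases ?m1) auto
        thus ?thesis by simp
      qed
      finally show ?thesis .
    qed
  qed
  moreover have "f q r (N*M) \<le> fK r (N*M) (pc c1 c2 M)"
    by (rule f_le[OF pc_coloring[OF assms(1) c1(1) c2(1)]])
  ultimately show ?thesis using c1 c2 by simp
qed

lemma f_le_N: "q > 0 \<Longrightarrow> f q r N \<le> N"
  using f_attained fK_le_N by metis

lemma f_pow: assumes "N > 0" "q > 0" shows "f q r (N^k) \<le> f q r N ^ k"
proof (induction k)
  case 0 thus ?case using f_le_N[OF assms(2), of r 1] by simp
next
  case (Suc k)
  have "f q r (N^Suc k) = f q r (N * N^k)" by simp
  also have "\<dots> \<le> f q r N * f q r (N^k)" by (rule submult) (use assms in simp_all)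
  also have "\<dots> \<le> f q r N * f q r N ^ k" using Suc by (rule mult_le_mono2)
  finally show ?case by simp
qed

theorem proposition3p6:
  fixes q r :: nat and \<alpha> :: real and \<epsilon> :: "nat \<Rightarrow> real"
  assumes "q > r" and "r \<ge> 1"
    and "\<epsilon> \<longlonglongrightarrow> 0"
    and "\<forall>N::nat. N > 0 \<longrightarrow> real (f q r N) \<ge> real N powr (\<alpha> - \<epsilon> N)"
  shows "\<forall>N::nat. N > 0 \<longrightarrow> real (f q r N) \<ge> real N powr \<alpha>"
proof (intro allI impI)
  fix N :: nat assume N: "N > 0"
  have q: "q > 0" using assms(1) by simp
  show "real (f q r N) \<ge> real N powr \<alpha>"
  proof (cases "N = 1")
    case True
    have "real 1 powr (\<alpha> - \<epsilon> 1) \<le> real (f q r 1)" by (rule assms(4)[rule_format]) simp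
    thus ?thesis using True by simp
  next
    case False
    hence N2: "N \<ge> 2" using N by simp
    let ?F = "real (f q r N)"
    have key: "real N powr (\<alpha> - \<epsilon> (N^k)) \<le> ?F" if k: "k > 0" for k
    proof -
      have "(real N powr (\<alpha> - \<epsilon> (N^k)))^k = real (N^k) powr (\<alpha> - \<epsilon> (N^k))"
      proof -
        have "real (N^k) = real N ^ k" by (rule of_nat_power)
        moreover have "(real N ^ k) powr (\<alpha> - \<epsilon> (N^k)) = (real N powr (\<alpha> - \<epsilon> (N^k)))^k"
          by (rule powr_pow_swap) (use N in simp)
        ultimately show ?thesis by simp
      qed
      also have "\<dots> \<le> real (f q r (N^k))" by (rule assms(4)[rule_format]) (use N in simp)
      also have "\<dots> \<le> ?F ^ k"
      proof -
        have "f q r (N^k) \<le> f q r N ^ k" by (rule f_pow[OF N q])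
        hence "real (f q r (N^k)) \<le> real (f q r N ^ k)" by (rule of_nat_mono)
        thus ?thesis by (simp only: of_nat_power)
      qed
      finally have le: "(real N powr (\<alpha> - \<epsilon> (N^k)))^k \<le> ?F ^ k" .
      obtain j where j: "k = Suc j" using k by (cases k) auto
      show ?thesis by (rule power_le_imp_le_base[of _ j]) (use le j in simp_all)
    qed
    have sm: "strict_mono (\<lambda>k. N^k)"
    proof (rule strict_monoI)
      fix a b :: nat assume "a < b"
      thus "N^a < N^b" using N2 by (intro power_strict_increasing) auto
    qed
    have "(\<epsilon> \<circ> (\<lambda>k. N^k)) \<longlonglongrightarrow> 0" by (rule LIMSEQ_subseq_LIMSEQ[OF assms(3) sm])
    hence e: "(\<lambda>k. \<epsilon> (N^k)) \<longlonglongrightarrow> 0" by (simp add: o_def)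
    have "(\<lambda>k. real N powr (\<alpha> - \<epsilon> (N^k))) \<longlonglongrightarrow> real N powr (\<alpha> - 0)"
    proof -
      have t: "(\<lambda>k. \<alpha> - \<epsilon> (N^k)) \<longlonglongrightarrow> \<alpha> - 0" by (intro tendsto_diff tendsto_const e)
      have "real N \<noteq> 0" using N by simp
      from tendsto_powr[OF tendsto_const t this] show ?thesis .
    qed
    hence lim: "(\<lambda>k. real N powr (\<alpha> - \<epsilon> (N^k))) \<longlonglongrightarrow> real N powr \<alpha>" by simp
    have "\<forall>k\<ge>1. real N powr (\<alpha> - \<epsilon> (N^k)) \<le> ?F" using key by simp
    hence "\<exists>n0. \<forall>k\<ge>n0. real N powr (\<alpha> - \<epsilon> (N^k)) \<le> ?F" by blast
    thus ?thesis by (rule LIMSEQ_le_const2[OF lim])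
  qed
qed

end
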